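(* Let $Q$ and $H$ be countable groups and let $(S_i)_{i\in\mathbb{N}}$ with $S_i\subseteq Q$ and $(T_i)_{i\in\mathbb{N}}$ with $T_i\subseteq H$ be ascending sequences of finite sets such that $Q$ is generated by $\bigcup_i S_i$ and $H$ is generated by $\bigcup_i T_i$. Assume there is a map $r\colon H\to Q$ such that for every $i$: (1) if $d_{T_i}(x,y)<\infty$ then $d_{S_i}(r(x),r(y))<\infty$; and (2) every element of $Q$ has finite $d_{S_i}$-distance to $r(H)$. If $H$ is finitely generated, then so is $Q$.
   Context: For a subset $S$ of a group, $d_S$ denotes the word metric with respect to $S$, i.e. the path metric of the Cayley graph with respect to $S$, taking the value $\infty$ for two elements not connected by a path in that graph. *)

theory Defs
  imports "HOL-Algebra.Algebra" "HOL-Library.Extended_Nat"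
begin

text \<open>Word metric d_S on a group G: the path metric of the Cayley graph of G with
  respect to S (edges x -- x s for s in S), i.e. the least length of a word in
  S and inverses of S leading from x to y; it is infinity if no such word exists
  (Inf of the empty set of enat is infinity).\<close>
definition word_dist :: "('a, 'b) monoid_scheme \<Rightarrow> 'a set \<Rightarrow> 'a \<Rightarrow> 'a \<Rightarrow> enat" where
  "word_dist G S x y =
     (INF ws \<in> {ws. set ws \<subseteq> S \<union> (\<lambda>s. inv\<^bsub>G\<^esub> s) ` S \<and> foldl (\<lambda>a b. a \<otimes>\<^bsub>G\<^esub> b) x ws = y}.
        enat (length ws))"

definition fin_gen_group :: "('a, 'b) monoid_scheme \<Rightarrow> bool" where
  "fin_gen_group G \<longleftrightarrow> (\<exists>A. finite A \<and> A \<subseteq> carrier G \<and> generate G A = carrier G)"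

end

theory Submission
  imports Defs
begin

context group
begin

lemma foldl_split:
  "x \<in> carrier G \<Longrightarrow> set ws \<subseteq> carrier G \<Longrightarrow>
   foldl (\<lambda>a b. a \<otimes> b) x ws = x \<otimes> foldl (\<lambda>a b. a \<otimes> b) \<one> ws
   \<and> foldl (\<lambda>a b. a \<otimes> b) \<one> ws \<in> carrier G"
proof (induction ws arbitrary: x)
  case Nil then show ?case by simp
next
  case (Cons b ws)
  have b: "b \<in> carrier G" and wsc: "set ws \<subseteq> carrier G" and xc: "x \<in> carrier G"
    using Cons.prems by auto
  have xb: "x \<otimes> b \<in> carrier G" using xc b by simp
  note I1 = Cons.IH[OF xb wsc] and I2 = Cons.IH[OF b wsc]
  have c: "foldl (\<lambda>a b. a \<otimes> b) \<one> ws \<in> carrier G" using I1 by blast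
  have e1: "foldl (\<lambda>a b. a \<otimes> b) x (b # ws) = (x \<otimes> b) \<otimes> foldl (\<lambda>a b. a \<otimes> b) \<one> ws"
    using I1 by simp
  have e2: "foldl (\<lambda>a b. a \<otimes> b) \<one> (b # ws) = b \<otimes> foldl (\<lambda>a b. a \<otimes> b) \<one> ws"
    using I2 b by simp
  show ?case unfolding e1 e2 using xc b c by (simp add: m_assoc)
qed

lemma words_gen:
  assumes "S \<subseteq> carrier G" "set ws \<subseteq> S \<union> (\<lambda>s. inv s) ` S"
  shows "foldl (\<lambda>a b. a \<otimes> b) \<one> ws \<in> generate G S"
  using assms(2)
proof (induction ws rule: rev_induct)
  case Nil then show ?case by (simp add: generate.one)
next
  case (snoc b ws)
  have "b \<in> generate G S" using snoc.prems by (auto intro: generate.incl generate.inv)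
  then show ?case using snoc by (auto intro: generate.eng)
qed

lemma gen_words:
  assumes "S \<subseteq> carrier G" "g \<in> generate G S"
  shows "(\<exists>ws. set ws \<subseteq> S \<union> (\<lambda>s. inv s) ` S \<and> foldl (\<lambda>a b. a \<otimes> b) \<one> ws = g)
       \<and> (\<exists>vs. set vs \<subseteq> S \<union> (\<lambda>s. inv s) ` S \<and> foldl (\<lambda>a b. a \<otimes> b) \<one> vs = inv g)"
  using assms(2)
proof (induction rule: generate.induct)
  case one
  show ?case by (rule conjI; rule exI[of _ "[]"]; simp)
next
  case (incl h)
  have hc: "h \<in> carrier G" using incl assms(1) by auto
  show ?case
    apply (rule conjI)
     apply (rule exI[of _ "[h]"]) using incl hc apply simp
    apply (rule exI[of _ "[inv h]"]) using incl hc by simp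
next
  case (inv h)
  have hc: "h \<in> carrier G" using inv assms(1) by auto
  show ?case
    apply (rule conjI)
     apply (rule exI[of _ "[inv h]"]) using inv hc apply simp
    apply (rule exI[of _ "[h]"]) using inv hc by simp
next
  case (eng h1 h2)
  have SS: "S \<union> (\<lambda>s. inv s) ` S \<subseteq> carrier G" using assms(1) by auto
  have h1c: "h1 \<in> carrier G" "h2 \<in> carrier G"
    using generate_in_carrier[OF assms(1) eng.hyps(1)] generate_in_carrier[OF assms(1) eng.hyps(2)] by auto
  from eng.IH(1) obtain w1 v1 where
    w1: "set w1 \<subseteq> S \<union> (\<lambda>s. inv s) ` S" "foldl (\<lambda>a b. a \<otimes> b) \<one> w1 = h1" and
    v1: "set v1 \<subseteq> S \<union> (\<lambda>s. inv s) ` S" "foldl (\<lambda>a b. a \<otimes> b) \<one> v1 = inv h1"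
    by blast
  from eng.IH(2) obtain w2 v2 where
    w2: "set w2 \<subseteq> S \<union> (\<lambda>s. inv s) ` S" "foldl (\<lambda>a b. a \<otimes> b) \<one> w2 = h2" and
    v2: "set v2 \<subseteq> S \<union> (\<lambda>s. inv s) ` S" "foldl (\<lambda>a b. a \<otimes> b) \<one> v2 = inv h2"
    by blast
  have a: "foldl (\<lambda>a b. a \<otimes> b) \<one> (w1 @ w2) = h1 \<otimes> h2"
    using foldl_split[of h1 w2] w1 w2 SS h1c by auto
  have b: "foldl (\<lambda>a b. a \<otimes> b) \<one> (v2 @ v1) = inv (h1 \<otimes> h2)"
    using foldl_split[of "inv h2" v1] v1 v2 SS h1c by (auto simp: inv_mult_group)
  have sa: "set (w1 @ w2) \<subseteq> S \<union> (\<lambda>s. inv s) ` S" using w1(1) w2(1) by simp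
  have sb: "set (v2 @ v1) \<subseteq> S \<union> (\<lambda>s. inv s) ` S" using v1(1) v2(1) by simp
  show ?case
    by (intro conjI exI[of _ "w1 @ w2"] exI[of _ "v2 @ v1"] sa sb a b)
qed

end

lemma wd_finite_iff:
  "word_dist G S x y < \<infinity> \<longleftrightarrow>
   (\<exists>ws. set ws \<subseteq> S \<union> (\<lambda>s. inv\<^bsub>G\<^esub> s) ` S \<and> foldl (\<lambda>a b. a \<otimes>\<^bsub>G\<^esub> b) x ws = y)"
  (is "_ \<longleftrightarrow> (\<exists>ws. ?P ws)")
proof
  assume h: "word_dist G S x y < \<infinity>"
  show "\<exists>ws. ?P ws"
  proof (rule ccontr)
    assume "\<not> (\<exists>ws. ?P ws)"
    then have e: "{ws. ?P ws} = {}" by blast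
    have "word_dist G S x y = \<infinity>"
      unfolding word_dist_def e by (simp add: top_enat_def)
    with h show False by simp
  qed
next
  assume "\<exists>ws. ?P ws"
  then obtain ws where ws: "?P ws" by blast
  have m: "ws \<in> {ws. ?P ws}" using ws by blast
  have "word_dist G S x y \<le> enat (length ws)"
    unfolding word_dist_def by (rule INF_lower[OF m])
  then show "word_dist G S x y < \<infinity>" using enat_ord_simps(4) le_less_trans by blast
qed

lemma gen_union_chain:
  assumes "group H" "\<And>i. T i \<subseteq> carrier H" "\<And>i. T i \<subseteq> T (Suc i)"
    and "g \<in> generate H (\<Union>i. T i)"
  shows "\<exists>n. g \<in> generate H (T n)"
  using assms(4)
proof (induction rule: generate.induct)
  case one then show ?case by (auto intro: generate.one)
next
  case (incl h) then show ?case by (auto intro: generate.incl)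
next
  case (inv h) then show ?case by (auto intro: generate.inv)
next
  case (eng h1 h2)
  then obtain n1 n2 where n: "h1 \<in> generate H (T n1)" "h2 \<in> generate H (T n2)" by blast
  have m: "\<And>k. k \<le> max n1 n2 \<Longrightarrow> T k \<subseteq> T (max n1 n2)"
    using lift_Suc_mono_le[of T, OF assms(3)] by blast
  have "h1 \<in> generate H (T (max n1 n2))"
    using n(1) group.mono_generate[OF assms(1) m[of n1]] by auto
  moreover have "h2 \<in> generate H (T (max n1 n2))"
    using n(2) group.mono_generate[OF assms(1) m[of n2]] by auto
  ultimately have "h1 \<in> generate H (T (max n1 n2)) \<and> h2 \<in> generate H (T (max n1 n2))" by blast
  then show ?case by (auto intro: generate.eng)
qed

theorem lemma5p6:
  fixes Q :: "('a, 'c) monoid_scheme" and H :: "('b, 'd) monoid_scheme"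
    and S :: "nat \<Rightarrow> 'a set" and T :: "nat \<Rightarrow> 'b set" and r :: "'b \<Rightarrow> 'a"
  assumes "group Q" and "group H"
    and "countable (carrier Q)" and "countable (carrier H)"
    and "\<And>i. finite (S i)" and "\<And>i. S i \<subseteq> carrier Q" and "\<And>i. S i \<subseteq> S (Suc i)"
    and "\<And>i. finite (T i)" and "\<And>i. T i \<subseteq> carrier H" and "\<And>i. T i \<subseteq> T (Suc i)"
    and "generate Q (\<Union>i. S i) = carrier Q"
    and "generate H (\<Union>i. T i) = carrier H"
    and "r \<in> carrier H \<rightarrow> carrier Q"
    and "\<And>i x y. x \<in> carrier H \<Longrightarrow> y \<in> carrier H \<Longrightarrow> word_dist H (T i) x y < \<infinity>
           \<Longrightarrow> word_dist Q (S i) (r x) (r y) < \<infinity>"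
    and "\<And>i q. q \<in> carrier Q \<Longrightarrow> \<exists>h \<in> carrier H. word_dist Q (S i) q (r h) < \<infinity>"
    and "fin_gen_group H"
  shows "fin_gen_group Q"
proof -
  interpret Q: group Q by fact
  interpret H: group H by fact
  obtain A where A: "finite A" "A \<subseteq> carrier H" "generate H A = carrier H"
    using assms(16) unfolding fin_gen_group_def by blast
  have gu: "\<And>g. g \<in> generate H (\<Union>i. T i) \<Longrightarrow> \<exists>n. g \<in> generate H (T n)"
    by (rule gen_union_chain[of H T]) (use assms in auto)
  have "\<forall>a\<in>A. \<exists>n. a \<in> generate H (T n)"
    using A assms(12) gu by blast
  then obtain f where f: "\<And>a. a \<in> A \<Longrightarrow> a \<in> generate H (T (f a))" by metis
  define n where "n = Max (insert 0 (f ` A))"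
  have "\<And>a. a \<in> A \<Longrightarrow> T (f a) \<subseteq> T n"
    using lift_Suc_mono_le[of T, OF assms(10)] A(1) unfolding n_def by simp
  then have "A \<subseteq> generate H (T n)"
    using f H.mono_generate by blast
  then have "generate H A \<subseteq> generate H (T n)"
    by (rule H.generate_subgroup_incl[OF _ H.generate_is_subgroup[OF assms(9)]])
  then have cH: "carrier H \<subseteq> generate H (T n)" using A by simp
  have r1: "r \<one>\<^bsub>H\<^esub> \<in> carrier Q" using assms(13) by auto
  define B where "B = insert (r \<one>\<^bsub>H\<^esub>) (S n)"
  have B: "finite B" "B \<subseteq> carrier Q" using assms(5,6) r1 unfolding B_def by auto
  have SB: "S n \<subseteq> B" unfolding B_def by auto
  have SSc: "S n \<union> (\<lambda>s. inv\<^bsub>Q\<^esub> s) ` S n \<subseteq> carrier Q" using assms(6) by auto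
  have "carrier Q \<subseteq> generate Q B"
  proof
    fix q assume q: "q \<in> carrier Q"
    obtain h where h: "h \<in> carrier H" "word_dist Q (S n) q (r h) < \<infinity>"
      using assms(15) q by blast
    obtain ws where ws: "set ws \<subseteq> T n \<union> (\<lambda>s. inv\<^bsub>H\<^esub> s) ` T n" "foldl (\<lambda>a b. a \<otimes>\<^bsub>H\<^esub> b) \<one>\<^bsub>H\<^esub> ws = h"
      using H.gen_words[OF assms(9), of h] cH h(1) by blast
    have "word_dist H (T n) \<one>\<^bsub>H\<^esub> h < \<infinity>"
      unfolding wd_finite_iff using ws by blast
    then have "word_dist Q (S n) (r \<one>\<^bsub>H\<^esub>) (r h) < \<infinity>"
      using assms(14) h(1) by blast
    then obtain w2 where w2: "set w2 \<subseteq> S n \<union> (\<lambda>s. inv\<^bsub>Q\<^esub> s) ` S n" "foldl (\<lambda>a b. a \<otimes>\<^bsub>Q\<^esub> b) (r \<one>\<^bsub>H\<^esub>) w2 = r h"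
      unfolding wd_finite_iff by blast
    obtain w1 where w1: "set w1 \<subseteq> S n \<union> (\<lambda>s. inv\<^bsub>Q\<^esub> s) ` S n" "foldl (\<lambda>a b. a \<otimes>\<^bsub>Q\<^esub> b) q w1 = r h"
      using h(2) unfolding wd_finite_iff by blast
    define g1 where "g1 = foldl (\<lambda>a b. a \<otimes>\<^bsub>Q\<^esub> b) \<one>\<^bsub>Q\<^esub> w1"
    define g2 where "g2 = foldl (\<lambda>a b. a \<otimes>\<^bsub>Q\<^esub> b) \<one>\<^bsub>Q\<^esub> w2"
    have e1: "q \<otimes>\<^bsub>Q\<^esub> g1 = r h" "g1 \<in> carrier Q"
    proof -
      have sw: "set w1 \<subseteq> carrier Q" using w1(1) SSc by blast
      note fs = Q.foldl_split[OF q sw]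
      show "q \<otimes>\<^bsub>Q\<^esub> g1 = r h" using fs w1(2) unfolding g1_def by simp
      show "g1 \<in> carrier Q" using fs unfolding g1_def by blast
    qed
    have e2: "r \<one>\<^bsub>H\<^esub> \<otimes>\<^bsub>Q\<^esub> g2 = r h" "g2 \<in> carrier Q"
    proof -
      have sw: "set w2 \<subseteq> carrier Q" using w2(1) SSc by blast
      note fs = Q.foldl_split[OF r1 sw]
      show "r \<one>\<^bsub>H\<^esub> \<otimes>\<^bsub>Q\<^esub> g2 = r h" using fs w2(2) unfolding g2_def by simp
      show "g2 \<in> carrier Q" using fs unfolding g2_def by blast
    qed
    have g1B: "g1 \<in> generate Q B" "g2 \<in> generate Q B"
      using subsetD[OF Q.mono_generate[OF SB] Q.words_gen[OF assms(6) w1(1)]]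
        subsetD[OF Q.mono_generate[OF SB] Q.words_gen[OF assms(6) w2(1)]]
      unfolding g1_def g2_def by auto
    have qeq: "q = (r \<one>\<^bsub>H\<^esub> \<otimes>\<^bsub>Q\<^esub> g2) \<otimes>\<^bsub>Q\<^esub> inv\<^bsub>Q\<^esub> g1"
      using Q.inv_solve_right[OF q Q.m_closed[OF r1 e2(2)] e1(2)] e1(1) e2(1) by simp
    have "r \<one>\<^bsub>H\<^esub> \<in> generate Q B" unfolding B_def by (auto intro: generate.incl)
    then have "r \<one>\<^bsub>H\<^esub> \<otimes>\<^bsub>Q\<^esub> g2 \<in> generate Q B"
      using g1B(2) by (rule generate.eng)
    moreover have "inv\<^bsub>Q\<^esub> g1 \<in> generate Q B"
      using Q.generate_m_inv_closed[OF B(2) g1B(1)] .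
    ultimately show "q \<in> generate Q B"
      unfolding qeq by (rule generate.eng)
  qed
  then have "generate Q B = carrier Q" using Q.generate_incl[OF B(2)] by blast
  then show ?thesis unfolding fin_gen_group_def using B by blast
qed

end
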